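(* Let $L$ and $R$ be finite sets of edges (2-subsets of $[n]$) and $M$ a finite set of triangles (3-subsets of $[n]$), satisfying: (LR) there are no $\{l_1<l_2\}\in L$ and $\{r_1<r_2\}\in R$ with $r_1<l_1<r_2<l_2$; (LMR) there are no $\{v_1<v_2\}\in L\cup R$ and $\{w_1<w_2<w_3\}\in M$ with $w_1<v_1<w_2<v_2<w_3$; (MM) there are no $\{v_1<v_2<v_3\},\{w_1<w_2<w_3\}\in M$ with $v_1<w_1<v_2<w_2<v_3<w_3$. For an edge $e=\{v_1<v_2\}$ consider the conditions: (Le) there is no $\{l_1<l_2\}\in L$ with $v_1<l_1<v_2<l_2$; (Me) there is no $\{w_1<w_2<w_3\}\in M$ with $w_1<v_1<w_2<v_2<w_3$; (Re) there is no $\{r_1<r_2\}\in R$ with $r_1<v_1<r_2<v_2$. Let $V\subseteq[n]$ with $|V|\ge3$ be such that every edge of the convex polygon $P=\mathrm{conv}(V)$ (the points $\gamma_2(t_i)$, $i\in V$) satisfies (Le), (Me) and (Re). Then there is a triangulation $T$ of $P$ with vertices in $V$ such that every edge of $T$ satisfies (Le), (Me) and (Re).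
   Context: $\gamma_2=\{(t,t^2):t\in\mathbb{R}\}$. Fix $t_1<\dots<t_n$ and identify $\gamma_2(t_i)$ with $i\in[n]$; subsets of $[n]$ are ordered by the usual order of integers. $L$ and $R$ may intersect, and any of $L,M,R$ may be empty. *)

theory Defs
  imports "HOL-Analysis.Analysis"
begin

definition gamma2 :: "real \<Rightarrow> real \<times> real" where
  "gamma2 s = (s, s^2)"

definition pt :: "(nat \<Rightarrow> real) \<Rightarrow> nat \<Rightarrow> real \<times> real" where
  "pt t i = gamma2 (t i)"

definition cond_LR :: "nat set set \<Rightarrow> nat set set \<Rightarrow> bool" where
  "cond_LR L R \<longleftrightarrow> \<not> (\<exists>l1 l2 r1 r2. {l1, l2} \<in> L \<and> l1 < l2 \<and> {r1, r2} \<in> R \<and> r1 < r2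
      \<and> r1 < l1 \<and> l1 < r2 \<and> r2 < l2)"

definition cond_LMR :: "nat set set \<Rightarrow> nat set set \<Rightarrow> nat set set \<Rightarrow> bool" where
  "cond_LMR L M R \<longleftrightarrow> \<not> (\<exists>v1 v2 w1 w2 w3. {v1, v2} \<in> L \<union> R \<and> v1 < v2
      \<and> {w1, w2, w3} \<in> M \<and> w1 < w2 \<and> w2 < w3
      \<and> w1 < v1 \<and> v1 < w2 \<and> w2 < v2 \<and> v2 < w3)"

definition cond_MM :: "nat set set \<Rightarrow> bool" where
  "cond_MM M \<longleftrightarrow> \<not> (\<exists>v1 v2 v3 w1 w2 w3. {v1, v2, v3} \<in> M \<and> v1 < v2 \<and> v2 < v3
      \<and> {w1, w2, w3} \<in> M \<and> w1 < w2 \<and> w2 < w3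
      \<and> v1 < w1 \<and> w1 < v2 \<and> v2 < w2 \<and> w2 < v3 \<and> v3 < w3)"

definition cond_Le :: "nat set set \<Rightarrow> nat set \<Rightarrow> bool" where
  "cond_Le L e \<longleftrightarrow> (\<forall>v1 v2. e = {v1, v2} \<and> v1 < v2 \<longrightarrow>
      \<not> (\<exists>l1 l2. {l1, l2} \<in> L \<and> l1 < l2 \<and> v1 < l1 \<and> l1 < v2 \<and> v2 < l2))"

definition cond_Me :: "nat set set \<Rightarrow> nat set \<Rightarrow> bool" where
  "cond_Me M e \<longleftrightarrow> (\<forall>v1 v2. e = {v1, v2} \<and> v1 < v2 \<longrightarrow>
      \<not> (\<exists>w1 w2 w3. {w1, w2, w3} \<in> M \<and> w1 < w2 \<and> w2 < w3
          \<and> w1 < v1 \<and> v1 < w2 \<and> w2 < v2 \<and> v2 < w3))"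

definition cond_Re :: "nat set set \<Rightarrow> nat set \<Rightarrow> bool" where
  "cond_Re R e \<longleftrightarrow> (\<forall>v1 v2. e = {v1, v2} \<and> v1 < v2 \<longrightarrow>
      \<not> (\<exists>r1 r2. {r1, r2} \<in> R \<and> r1 < r2 \<and> r1 < v1 \<and> v1 < r2 \<and> r2 < v2))"

definition good_edge :: "nat set set \<Rightarrow> nat set set \<Rightarrow> nat set set \<Rightarrow> nat set \<Rightarrow> bool" where
  "good_edge L M R e \<longleftrightarrow> cond_Le L e \<and> cond_Me M e \<and> cond_Re R e"

definition polygon_edge :: "(nat \<Rightarrow> real) \<Rightarrow> nat set \<Rightarrow> nat set \<Rightarrow> bool" where
  "polygon_edge t V e \<longleftrightarrow> (\<exists>i j. e = {i, j} \<and> i \<in> V \<and> j \<in> V \<and> i \<noteq> j \<and>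
      closed_segment (pt t i) (pt t j) face_of convex hull (pt t ` V))"

definition is_triangulation :: "(nat \<Rightarrow> real) \<Rightarrow> nat set \<Rightarrow> nat set set \<Rightarrow> bool" where
  "is_triangulation t V T \<longleftrightarrow> finite T \<and> (\<forall>\<tau>\<in>T. \<tau> \<subseteq> V \<and> card \<tau> = 3) \<and>
      (\<Union>\<tau>\<in>T. convex hull (pt t ` \<tau>)) = convex hull (pt t ` V) \<and>
      (\<forall>\<tau>1\<in>T. \<forall>\<tau>2\<in>T. convex hull (pt t ` \<tau>1) \<inter> convex hull (pt t ` \<tau>2)
                        = convex hull (pt t ` (\<tau>1 \<inter> \<tau>2)))"

definition tri_edges :: "nat set set \<Rightarrow> nat set set" where
  "tri_edges T = {e. \<exists>\<tau>\<in>T. e \<subseteq> \<tau> \<and> card e = 2}"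

end

theory Submission
  imports Defs
begin


lemma hull_hyperplane_sub:
  fixes S :: "(real \<times> real) set" and c :: "real \<times> real"
  assumes "finite S" "\<And>x. x \<in> S \<Longrightarrow> c \<bullet> x \<le> d"
  shows "convex hull S \<inter> {x. c \<bullet> x = d} \<subseteq> convex hull (S \<inter> {x. c \<bullet> x = d})"
proof -
  have le: "\<And>x. x \<in> convex hull S \<Longrightarrow> c \<bullet> x \<le> d"
  proof -
    have "convex hull S \<subseteq> {x. c \<bullet> x \<le> d}"
      by (rule hull_minimal) (use assms(2) convex_halfspace_le in auto)
    then show "\<And>x. x \<in> convex hull S \<Longrightarrow> c \<bullet> x \<le> d" by auto
  qed
  have F: "(convex hull S \<inter> {x. c \<bullet> x = d}) face_of convex hull S"
    by (rule face_of_Int_supporting_hyperplane_le) (auto intro: le)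
  have "compact S" using assms(1) by (simp add: finite_imp_compact)
  then obtain S' where S': "S' \<subseteq> S" "convex hull S \<inter> {x. c \<bullet> x = d} = convex hull S'"
    using face_of_convex_hull_subset F by blast
  have "S' \<subseteq> {x. c \<bullet> x = d}"
    using S' hull_subset[of S' convex] by blast
  then have "S' \<subseteq> S \<inter> {x. c \<bullet> x = d}" using S' by blast
  then show ?thesis using S' hull_mono by metis
qed

definition sec :: "real \<Rightarrow> real \<Rightarrow> real \<times> real \<Rightarrow> real" where
  "sec a b x = snd x - (a+b) * fst x + a*b"

lemma sec_inner: "sec a b x = (-(a+b), 1) \<bullet> x + a*b"
  by (cases x) (simp add: sec_def inner_prod_def algebra_simps)

lemma sec_pt: "sec a b (pt t i) = (t i - a) * (t i - b)"
  by (simp add: sec_def pt_def gamma2_def power2_eq_square algebra_simps)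

lemma hull_sec_le:
  assumes "\<And>x. x \<in> S \<Longrightarrow> sec a b x \<le> 0" "y \<in> convex hull S"
  shows "sec a b y \<le> 0"
proof -
  have "\<And>x. x \<in> S \<Longrightarrow> (-(a+b), 1) \<bullet> x \<le> - (a*b)"
    using assms(1) sec_inner[of a b] by (smt (verit))
  then have "convex hull S \<subseteq> {x. (-(a+b), 1) \<bullet> x \<le> - (a*b)}"
    by (intro hull_minimal) (auto simp: convex_halfspace_le)
  then show ?thesis using assms(2) sec_inner[of a b y] by auto
qed

lemma hull_sec_ge:
  assumes "\<And>x. x \<in> S \<Longrightarrow> sec a b x \<ge> 0" "y \<in> convex hull S"
  shows "sec a b y \<ge> 0"
proof -
  have ii: "\<And>x. (a+b, -1) \<bullet> x = - ((-(a+b), 1) \<bullet> x)"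
    by (simp add: inner_prod_def algebra_simps)
  have "\<And>x. x \<in> S \<Longrightarrow> (a+b, -1) \<bullet> x \<le> a*b"
    using assms(1) sec_inner[of a b] ii by (smt (verit))
  then have "convex hull S \<subseteq> {x. (a+b, -1) \<bullet> x \<le> a*b}"
    by (intro hull_minimal) (auto simp: convex_halfspace_le)
  then show ?thesis using assms(2) sec_inner[of a b y] ii[of y] by auto
qed

lemma sec_le_sub:
  fixes S :: "(real \<times> real) set"
  assumes "finite S" "\<And>x. x \<in> S \<Longrightarrow> sec a b x \<le> 0"
  shows "convex hull S \<inter> {x. sec a b x = 0} \<subseteq> convex hull (S \<inter> {x. sec a b x = 0})"
proof -
  have e: "{x. sec a b x = 0} = {x. (-(a+b), 1) \<bullet> x = - (a*b)}"
    using sec_inner[of a b] by (smt (verit) Collect_cong)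
  show ?thesis unfolding e
    by (rule hull_hyperplane_sub) (use assms sec_inner[of a b] in \<open>smt (verit)\<close>)+
qed

lemma sec_ge_sub:
  fixes S :: "(real \<times> real) set"
  assumes "finite S" "\<And>x. x \<in> S \<Longrightarrow> sec a b x \<ge> 0"
  shows "convex hull S \<inter> {x. sec a b x = 0} \<subseteq> convex hull (S \<inter> {x. sec a b x = 0})"
proof -
  have e: "{x. sec a b x = 0} = {x. (a+b, -1) \<bullet> x = a*b}"
  proof -
    have ii: "\<And>x. (a+b, -1) \<bullet> x = - ((-(a+b), 1) \<bullet> x)"
      by (simp add: inner_prod_def algebra_simps)
    show ?thesis using sec_inner[of a b] ii by (smt (verit) Collect_cong)
  qed
  have ii: "\<And>x. (a+b, -1) \<bullet> x = - ((-(a+b), 1) \<bullet> x)"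
    by (simp add: inner_prod_def algebra_simps)
  show ?thesis unfolding e
    by (rule hull_hyperplane_sub) (use assms sec_inner[of a b] ii in \<open>smt (verit)\<close>)+
qed


lemma sec_comb: "sec a b ((1 - s) *\<^sub>R x + s *\<^sub>R y) = (1 - s) * sec a b x + s * sec a b y"
  by (cases x; cases y) (simp add: sec_def algebra_simps)

lemma mix_seg:
  fixes x y :: "real \<times> real"
  assumes C1: "convex C1" and C2: "convex C2" and x: "x \<in> C1" and y: "y \<in> C2"
    and gx: "sec a b x \<le> 0" and gy: "sec a b y \<ge> 0"
    and Z: "\<And>z. z \<in> closed_segment x y \<Longrightarrow> sec a b z = 0 \<Longrightarrow> z \<in> C1 \<inter> C2"
  shows "closed_segment x y \<subseteq> C1 \<union> C2"
proof (cases "sec a b x = sec a b y")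
  case True
  then have "sec a b x = 0" using gx gy by linarith
  then have "x \<in> C2" using Z[of x] by auto
  then show ?thesis using closed_segment_subset[OF _ y C2] by blast
next
  case False
  define s where "s = sec a b x / (sec a b x - sec a b y)"
  have d: "sec a b x - sec a b y < 0" using False gx gy by linarith
  have s0: "0 \<le> s" unfolding s_def using d gx by (simp add: divide_nonpos_neg)
  have s1: "s \<le> 1" unfolding s_def using d gy by (simp add: divide_le_eq)
  define z where "z = (1 - s) *\<^sub>R x + s *\<^sub>R y"
  have zs: "z \<in> closed_segment x y" unfolding z_def in_segment using s0 s1 by blast
  have "sec a b z = (1 - s) * sec a b x + s * sec a b y" unfolding z_def by (rule sec_comb)
  also have "\<dots> = 0" unfolding s_def using d by (simp add: field_simps)
  finally have "z \<in> C1 \<inter> C2" using Z zs by blast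
  then have "closed_segment x z \<subseteq> C1" "closed_segment z y \<subseteq> C2"
    using closed_segment_subset C1 C2 x y by blast+
  moreover have "closed_segment x z \<union> closed_segment z y = closed_segment x y"
    by (rule Un_closed_segment[OF zs])
  ultimately show ?thesis by blast
qed

lemma line_seg:
  fixes z :: "real \<times> real"
  assumes ab: "ta < tb" and z0: "sec ta tb z = 0" and za: "sec ta ta z \<ge> 0" and zb: "sec tb tb z \<ge> 0"
  shows "z \<in> closed_segment (gamma2 ta) (gamma2 tb)"
proof -
  obtain zx zy where z: "z = (zx, zy)" by (cases z)
  have e: "zy = (ta+tb)*zx - ta*tb" using z0 by (simp add: z sec_def)
  have "(tb - ta) * (zx - ta) \<ge> 0" using za by (simp add: z sec_def e algebra_simps)
  then have z1: "zx \<ge> ta" using ab by (simp add: zero_le_mult_iff)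
  have "(tb - ta) * (tb - zx) \<ge> 0" using zb by (simp add: z sec_def e algebra_simps)
  then have z2: "zx \<le> tb" using ab by (simp add: zero_le_mult_iff)
  define u where "u = (zx - ta) / (tb - ta)"
  have u0: "0 \<le> u" "u \<le> 1" unfolding u_def using ab z1 z2 by (auto simp: divide_simps)
  have "z = (1 - u) *\<^sub>R gamma2 ta + u *\<^sub>R gamma2 tb"
  proof -
    have d: "tb - ta \<noteq> 0" using ab by simp
    have uu: "u * (tb - ta) = zx - ta" unfolding u_def using d by simp
    have "(1 - u) * ta + u * tb = ta + u * (tb - ta)" by (simp add: algebra_simps)
    then have f: "(1 - u) * ta + u * tb = zx" using uu by simp
    have "(1 - u) * ta^2 + u * tb^2 = ta^2 + u * (tb - ta) * (ta + tb)"
      by (simp add: algebra_simps power2_eq_square)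
    also note uu
    finally have g: "(1 - u) * ta^2 + u * tb^2 = zy" by (simp add: e algebra_simps power2_eq_square)
    show ?thesis unfolding z gamma2_def using f g by simp
  qed
  then show ?thesis unfolding in_segment using u0 by blast
qed


lemma small_int:
  fixes P :: "nat \<Rightarrow> real \<times> real"
  assumes X: "X \<subseteq> {a,b}" and Y: "Y \<subseteq> {a,b}" and ne: "P a \<noteq> P b"
  shows "convex hull (P ` X) \<inter> convex hull (P ` Y) \<subseteq> convex hull (P ` (X \<inter> Y))"
proof (cases "X \<subseteq> Y \<or> Y \<subseteq> X")
  case True
  then show ?thesis
  proof
    assume "X \<subseteq> Y" then have "X \<inter> Y = X" by blast
    then show ?thesis by simp
  next
    assume "Y \<subseteq> X" then have "X \<inter> Y = Y" by blast
    then show ?thesis by simp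
  qed
next
  case False
  then obtain x y where xy: "x \<in> X" "x \<notin> Y" "y \<in> Y" "y \<notin> X" by blast
  have "x \<noteq> y" using xy by blast
  have xs: "x = a \<or> x = b" "y = a \<or> y = b" using xy X Y by blast+
  have "X = {x}" using xy X xs by blast
  moreover have "Y = {y}" using xy Y xs by blast
  moreover have "P x \<noteq> P y" using xs \<open>x \<noteq> y\<close> ne by metis
  ultimately show ?thesis by simp
qed

context
  fixes n :: nat and t :: "nat \<Rightarrow> real"
  assumes tm: "strict_mono_on {1..n} t"
begin

lemma tlt: "i \<in> {1..n} \<Longrightarrow> j \<in> {1..n} \<Longrightarrow> i < j \<Longrightarrow> t i < t j"
  by (rule strict_mono_onD[OF tm])

lemma tle: "i \<in> {1..n} \<Longrightarrow> j \<in> {1..n} \<Longrightarrow> i \<le> j \<Longrightarrow> t i \<le> t j"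
proof (cases "i = j")
  case False
  assume "i \<in> {1..n}" "j \<in> {1..n}" "i \<le> j"
  then show ?thesis using tlt[of i j] False by simp
qed simp

lemma teq: "i \<in> {1..n} \<Longrightarrow> j \<in> {1..n} \<Longrightarrow> t i = t j \<Longrightarrow> i = j"
proof (rule ccontr)
  assume a: "i \<in> {1..n}" "j \<in> {1..n}" "t i = t j" "i \<noteq> j"
  then consider "i < j" | "j < i" by linarith
  then show False using tlt[of i j] tlt[of j i] a by cases auto
qed

lemma pt_ne: "i \<in> {1..n} \<Longrightarrow> j \<in> {1..n} \<Longrightarrow> i \<noteq> j \<Longrightarrow> pt t i \<noteq> pt t j"
proof
  assume "i \<in> {1..n}" "j \<in> {1..n}" "i \<noteq> j" "pt t i = pt t j"
  then show False using teq[of i j] by (simp add: pt_def gamma2_def)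
qed

lemma sec_zero:
  assumes "i \<in> {1..n}" "a \<in> {1..n}" "b \<in> {1..n}"
  shows "sec (t a) (t b) (pt t i) = 0 \<longleftrightarrow> i = a \<or> i = b"
  using teq[OF assms(1) assms(2)] teq[OF assms(1) assms(3)] by (auto simp: sec_pt)

lemma img_H:
  assumes "A \<subseteq> {1..n}" "a \<in> {1..n}" "b \<in> {1..n}"
  shows "pt t ` A \<inter> {x. sec (t a) (t b) x = 0} = pt t ` (A \<inter> {a,b})"
  using sec_zero assms by auto

lemma sec_in:
  assumes "a \<in> {1..n}" "b \<in> {1..n}" "i \<in> {1..n}" "a \<le> i" "i \<le> b"
  shows "sec (t a) (t b) (pt t i) \<le> 0"
  using tle[of a i] tle[of i b] assms by (simp add: sec_pt mult_nonneg_nonpos)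

lemma sec_out:
  assumes "a \<in> {1..n}" "b \<in> {1..n}" "i \<in> {1..n}" "a \<le> b" "i \<le> a \<or> b \<le> i"
  shows "sec (t a) (t b) (pt t i) \<ge> 0"
proof -
  have "t a \<le> t b" using tle assms by blast
  from assms(5) show ?thesis
  proof
    assume "i \<le> a" then have "t i \<le> t a" using tle assms by blast
    then show ?thesis using \<open>t a \<le> t b\<close> by (simp add: sec_pt mult_nonpos_nonpos)
  next
    assume "b \<le> i" then have "t b \<le> t i" using tle assms by blast
    then show ?thesis using \<open>t a \<le> t b\<close> by (simp add: sec_pt)
  qed
qed

lemma chord_int:
  assumes ab: "a < b" "a \<in> {1..n}" "b \<in> {1..n}"
    and A: "A \<subseteq> {1..n}" "\<forall>i\<in>A. a \<le> i \<and> i \<le> b" "finite A"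
    and B: "B \<subseteq> {1..n}" "\<forall>i\<in>B. i \<le> a \<or> b \<le> i" "finite B"
  shows "convex hull (pt t ` A) \<inter> convex hull (pt t ` B) = convex hull (pt t ` (A \<inter> B))"
proof
  show "convex hull (pt t ` (A \<inter> B)) \<subseteq> convex hull (pt t ` A) \<inter> convex hull (pt t ` B)"
    by (simp add: hull_mono image_mono)
  let ?g = "sec (t a) (t b)"
  have gA: "\<And>x. x \<in> pt t ` A \<Longrightarrow> ?g x \<le> 0" using sec_in A ab by auto
  have gB: "\<And>x. x \<in> pt t ` B \<Longrightarrow> ?g x \<ge> 0" using sec_out B ab by auto
  show "convex hull (pt t ` A) \<inter> convex hull (pt t ` B) \<subseteq> convex hull (pt t ` (A \<inter> B))"
  proof
    fix x assume x: "x \<in> convex hull (pt t ` A) \<inter> convex hull (pt t ` B)"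
    have "?g x \<le> 0" using hull_sec_le[OF gA] x by blast
    moreover have "?g x \<ge> 0" using hull_sec_ge[OF gB] x by blast
    ultimately have x0: "?g x = 0" by linarith
    have "x \<in> convex hull (pt t ` A \<inter> {x. ?g x = 0})"
      using sec_le_sub[OF _ gA] x x0 A by blast
    then have x1: "x \<in> convex hull (pt t ` (A \<inter> {a,b}))" using img_H A ab by simp
    have "x \<in> convex hull (pt t ` B \<inter> {x. ?g x = 0})"
      using sec_ge_sub[OF _ gB] x x0 B by blast
    then have x2: "x \<in> convex hull (pt t ` (B \<inter> {a,b}))" using img_H B ab by simp
    have "x \<in> convex hull (pt t ` ((A \<inter> {a,b}) \<inter> (B \<inter> {a,b})))"
      using small_int[of "A \<inter> {a,b}" a b "B \<inter> {a,b}" "pt t"] x1 x2 pt_ne ab by auto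
    moreover have "convex hull (pt t ` ((A \<inter> {a,b}) \<inter> (B \<inter> {a,b}))) \<subseteq> convex hull (pt t ` (A \<inter> B))"
      by (rule hull_mono) auto
    ultimately show "x \<in> convex hull (pt t ` (A \<inter> B))" by blast
  qed
qed

lemma tangent:
  assumes "S \<subseteq> {1..n}" "x \<in> convex hull (pt t ` S)"
  shows "sec c c x \<ge> 0"
  by (rule hull_sec_ge[OF _ assms(2)]) (auto simp: sec_pt)

lemma chord_cover:
  assumes ab: "a < b" "a \<in> W" "b \<in> W" and W: "W \<subseteq> {1..n}" "finite W"
  shows "convex hull (pt t ` W) \<subseteq> convex hull (pt t ` {i\<in>W. a \<le> i \<and> i \<le> b})
           \<union> convex hull (pt t ` {i\<in>W. i \<le> a \<or> b \<le> i})"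
proof -
  let ?I = "{i\<in>W. a \<le> i \<and> i \<le> b}" and ?O = "{i\<in>W. i \<le> a \<or> b \<le> i}"
  let ?CI = "convex hull (pt t ` ?I)" and ?CO = "convex hull (pt t ` ?O)"
  let ?g = "sec (t a) (t b)"
  have an: "a \<in> {1..n}" "b \<in> {1..n}" using ab W by auto
  have WU: "W = ?I \<union> ?O" by auto
  have neI: "?CI \<noteq> {}" using ab by auto
  have neO: "?CO \<noteq> {}" using ab by auto
  have "convex hull (pt t ` W) \<subseteq> convex hull (?CI \<union> ?CO)"
    apply (rule hull_mono) using hull_subset[of "pt t ` ?I" convex] hull_subset[of "pt t ` ?O" convex]
    by (subst WU, auto)
  also have "\<dots> = {u *\<^sub>R s + v *\<^sub>R q | u v s q. u \<ge> 0 \<and> v \<ge> 0 \<and> u + v = 1 \<and> s \<in> ?CI \<and> q \<in> ?CO}"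
    by (rule convex_hull_union_two) (use neI neO in auto)
  also have "\<dots> \<subseteq> ?CI \<union> ?CO"
  proof
    fix p assume "p \<in> {u *\<^sub>R s + v *\<^sub>R q | u v s q. u \<ge> 0 \<and> v \<ge> 0 \<and> u + v = 1 \<and> s \<in> ?CI \<and> q \<in> ?CO}"
    then obtain u v s q where uv: "u \<ge> 0" "v \<ge> 0" "u + v = 1" and s: "s \<in> ?CI" and q: "q \<in> ?CO"
      and p: "p = u *\<^sub>R s + v *\<^sub>R q" by blast
    have "u = 1 - v" using uv by simp
    then have "p = (1 - v) *\<^sub>R s + v *\<^sub>R q" using p by simp
    then have ps: "p \<in> closed_segment s q" unfolding in_segment using uv by auto
    have gs: "?g s \<le> 0" by (rule hull_sec_le[OF _ s]) (use sec_in an W in auto)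
    have gq: "?g q \<ge> 0" by (rule hull_sec_ge[OF _ q]) (use sec_out an W ab in auto)
    have sub: "?CI \<subseteq> convex hull (pt t ` W)" "?CO \<subseteq> convex hull (pt t ` W)"
      by (auto intro!: hull_mono)
    have seg: "closed_segment (pt t a) (pt t b) \<subseteq> ?CI \<inter> ?CO"
      unfolding segment_convex_hull using ab by (auto intro!: hull_mono)
    have "closed_segment s q \<subseteq> ?CI \<union> ?CO"
    proof (rule mix_seg[OF convex_convex_hull convex_convex_hull s q gs gq])
      fix z assume zs: "z \<in> closed_segment s q" and z0: "?g z = 0"
      have "z \<in> convex hull (pt t ` W)"
        using zs closed_segment_subset_convex_hull[of s "pt t ` W" q] sub s q by blast
      then have "sec (t a) (t a) z \<ge> 0" "sec (t b) (t b) z \<ge> 0" using tangent W by blast+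
      then have "z \<in> closed_segment (gamma2 (t a)) (gamma2 (t b))"
        using line_seg[OF _ z0] tlt an ab by blast
      then have "z \<in> closed_segment (pt t a) (pt t b)" by (simp add: pt_def)
      then show "z \<in> ?CI \<inter> ?CO" using seg by blast
    qed
    then show "p \<in> ?CI \<union> ?CO" using ps by blast
  qed
  finally show ?thesis .
qed

end




definition gd :: "nat set set \<Rightarrow> nat set set \<Rightarrow> nat set set \<Rightarrow> nat \<Rightarrow> nat \<Rightarrow> bool" where
  "gd L M R a b \<longleftrightarrow>
     \<not> (\<exists>l1 l2. {l1, l2} \<in> L \<and> l1 < l2 \<and> a < l1 \<and> l1 < b \<and> b < l2) \<and>
     \<not> (\<exists>w1 w2 w3. {w1, w2, w3} \<in> M \<and> w1 < w2 \<and> w2 < w3 \<and> w1 < a \<and> a < w2 \<and> w2 < b \<and> b < w3) \<and>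
     \<not> (\<exists>r1 r2. {r1, r2} \<in> R \<and> r1 < r2 \<and> r1 < a \<and> a < r2 \<and> r2 < b)"

lemma good_gd: "a < b \<Longrightarrow> good_edge L M R {a, b} \<longleftrightarrow> gd L M R a b"
proof -
  assume ab: "a < b"
  have k: "\<And>v1 v2. {a, b} = {v1, v2} \<and> v1 < v2 \<longleftrightarrow> v1 = a \<and> v2 = b"
    using ab by (auto simp: doubleton_eq_iff)
  show ?thesis unfolding good_edge_def cond_Le_def cond_Me_def cond_Re_def gd_def k by simp
qed

lemma between:
  fixes V :: "nat set"
  assumes fin: "finite V" and m: "m \<in> V" "m < x" and k: "k \<in> V" "x < k" and x: "x \<notin> V"
  obtains p q where "p \<in> V" "q \<in> V" "m \<le> p" "p < x" "x < q" "q \<le> k" "\<forall>y\<in>V. \<not> (p < y \<and> y < q)"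
proof -
  let ?A = "{v\<in>V. v < x}" and ?B = "{v\<in>V. x < v}"
  have A: "finite ?A" "?A \<noteq> {}" using fin m by auto
  have B: "finite ?B" "?B \<noteq> {}" using fin k by auto
  define p where "p = Max ?A"
  define q where "q = Min ?B"
  have p: "p \<in> ?A" unfolding p_def using Max_in[OF A] .
  have q: "q \<in> ?B" unfolding q_def using Min_in[OF B] .
  have "m \<le> p" unfolding p_def using A m by (auto intro: Max_ge)
  moreover have "q \<le> k" unfolding q_def using B k by (auto intro: Min_le)
  moreover have "\<forall>y\<in>V. \<not> (p < y \<and> y < q)"
  proof (intro ballI notI)
    fix y assume y: "y \<in> V" "p < y \<and> y < q"
    show False
    proof (cases "y < x")
      case True then have "y \<le> p" unfolding p_def using A y by (auto intro: Max_ge)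
      then show False using y by simp
    next
      case False then have "x < y" using y x by (cases "x = y") auto
      then have "q \<le> y" unfolding q_def using B y by (auto intro: Min_le)
      then show False using y by simp
    qed
  qed
  ultimately show ?thesis using that p q by auto
qed

lemma gdL: "gd L M R a b \<Longrightarrow> {l1, l2} \<in> L \<Longrightarrow> l1 < l2 \<Longrightarrow> a < l1 \<Longrightarrow> l1 < b \<Longrightarrow> b < l2 \<Longrightarrow> False"
  unfolding gd_def by blast
lemma gdM: "gd L M R a b \<Longrightarrow> {w1, w2, w3} \<in> M \<Longrightarrow> w1 < w2 \<Longrightarrow> w2 < w3 \<Longrightarrow> w1 < a \<Longrightarrow> a < w2 \<Longrightarrow> w2 < b \<Longrightarrow> b < w3 \<Longrightarrow> False"
  unfolding gd_def by blast
lemma gdR: "gd L M R a b \<Longrightarrow> {r1, r2} \<in> R \<Longrightarrow> r1 < r2 \<Longrightarrow> r1 < a \<Longrightarrow> a < r2 \<Longrightarrow> r2 < b \<Longrightarrow> False"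
  unfolding gd_def by blast
lemma LR': "cond_LR L R \<Longrightarrow> {l1, l2} \<in> L \<Longrightarrow> l1 < l2 \<Longrightarrow> {r1, r2} \<in> R \<Longrightarrow> r1 < r2 \<Longrightarrow> r1 < l1 \<Longrightarrow> l1 < r2 \<Longrightarrow> r2 < l2 \<Longrightarrow> False"
  unfolding cond_LR_def by blast
lemma LMR': "cond_LMR L M R \<Longrightarrow> {v1, v2} \<in> L \<union> R \<Longrightarrow> v1 < v2 \<Longrightarrow> {w1, w2, w3} \<in> M \<Longrightarrow> w1 < w2 \<Longrightarrow> w2 < w3
   \<Longrightarrow> w1 < v1 \<Longrightarrow> v1 < w2 \<Longrightarrow> w2 < v2 \<Longrightarrow> v2 < w3 \<Longrightarrow> False"
  unfolding cond_LMR_def by blast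
lemma MM': "cond_MM M \<Longrightarrow> {v1, v2, v3} \<in> M \<Longrightarrow> v1 < v2 \<Longrightarrow> v2 < v3 \<Longrightarrow> {w1, w2, w3} \<in> M \<Longrightarrow> w1 < w2 \<Longrightarrow> w2 < w3
   \<Longrightarrow> v1 < w1 \<Longrightarrow> w1 < v2 \<Longrightarrow> v2 < w2 \<Longrightarrow> w2 < v3 \<Longrightarrow> v3 < w3 \<Longrightarrow> False"
  unfolding cond_MM_def by blast

lemma key_comb:
  fixes V :: "nat set"
  assumes LR: "cond_LR L R" and LMR: "cond_LMR L M R" and MM: "cond_MM M"
    and fin: "finite V" and v1: "v1 \<in> V" and vk: "vk \<in> V" and m: "m \<in> V" "v1 < m" "m < vk"
    and g1m: "gd L M R v1 m" and g1k: "gd L M R v1 vk"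
    and mx: "\<forall>u\<in>V. m < u \<and> u < vk \<longrightarrow> \<not> gd L M R v1 u"
    and cons: "\<forall>p\<in>V. \<forall>q\<in>V. p < q \<and> (\<forall>y\<in>V. \<not> (p < y \<and> y < q)) \<longrightarrow> gd L M R p q"
  shows "gd L M R m vk"
proof (rule ccontr)
  assume "\<not> gd L M R m vk"
  then consider
    (L) l1 l2 where "{l1, l2} \<in> L" "l1 < l2" "m < l1" "l1 < vk" "vk < l2"
  | (M) w1 w2 w3 where "{w1, w2, w3} \<in> M" "w1 < w2" "w2 < w3" "w1 < m" "m < w2" "w2 < vk" "vk < w3"
  | (R) r1 r2 where "{r1, r2} \<in> R" "r1 < r2" "r1 < m" "m < r2" "r2 < vk"
    unfolding gd_def by blast
  then show False
  proof cases
    case L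
    show False by (rule gdL[OF g1k L(1,2)]) (use L m in linarith)+
  next
    case M
    show False
    proof (cases "w1 < v1")
      case True show False by (rule gdM[OF g1k M(1,2,3)]) (use True M m in linarith)+
    next
      case False
      have w2V: "w2 \<in> V"
      proof (rule ccontr)
        assume "w2 \<notin> V"
        then obtain p q where pq: "p \<in> V" "q \<in> V" "m \<le> p" "p < w2" "w2 < q" "q \<le> vk" "\<forall>y\<in>V. \<not> (p < y \<and> y < q)"
          using between[OF fin m(1) M(5) vk M(6)] by blast
        have gpq: "gd L M R p q" using cons pq by force
        show False by (rule gdM[OF gpq M(1,2,3)]) (use pq M \<open>\<not> w1 < v1\<close> in linarith)+
      qed
      then have "\<not> gd L M R v1 w2" using mx M by blast
      then consider
        (LL) l1 l2 where "{l1, l2} \<in> L" "l1 < l2" "v1 < l1" "l1 < w2" "w2 < l2"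
      | (MM) x1 x2 x3 where "{x1, x2, x3} \<in> M" "x1 < x2" "x2 < x3" "x1 < v1" "v1 < x2" "x2 < w2" "w2 < x3"
      | (RR) r1 r2 where "{r1, r2} \<in> R" "r1 < r2" "r1 < v1" "v1 < r2" "r2 < w2"
        unfolding gd_def by blast
      then show False
      proof cases
        case LL
        show False
        proof (cases "l1 < m")
          case True show False by (rule gdL[OF g1m LL(1,2)]) (use True LL M in linarith)+
        next
          case False
          show False
          proof (cases "l2 < w3")
            case True show False by (rule LMR'[OF LMR _ LL(2) M(1,2,3)]) (use True LL M False in \<open>auto\<close>)
          next
            case False
            show False by (rule gdL[OF g1k LL(1,2)]) (use False LL M in linarith)+
          qed
        qed
      next
        case RR show False by (rule gdR[OF g1k RR(1,2)]) (use RR M in linarith)+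
      next
        case MM
        show False
        proof (cases "x2 < m")
          case True show False by (rule gdM[OF g1m MM(1,2,3)]) (use True MM M in linarith)+
        next
          case x2m: False
          show False
          proof (cases "vk < x3")
            case True show False by (rule gdM[OF g1k MM(1,2,3)]) (use True MM M x2m m in linarith)+
          next
            case False
            show False by (rule MM'[OF \<open>cond_MM M\<close> MM(1,2,3) M(1,2,3)]) (use False MM M x2m \<open>\<not> w1 < v1\<close> in linarith)+
          qed
        qed
      qed
    qed
  next
    case R
    show False
    proof (cases "r1 < v1")
      case True show False by (rule gdR[OF g1k R(1,2)]) (use True R m in linarith)+
    next
      case False
      have r2V: "r2 \<in> V"
      proof (rule ccontr)
        assume "r2 \<notin> V"
        then obtain p q where pq: "p \<in> V" "q \<in> V" "m \<le> p" "p < r2" "r2 < q" "q \<le> vk" "\<forall>y\<in>V. \<not> (p < y \<and> y < q)"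
          using between[OF fin m(1) R(4) vk R(5)] by blast
        have gpq: "gd L M R p q" using cons pq by force
        show False by (rule gdR[OF gpq R(1,2)]) (use pq R \<open>\<not> r1 < v1\<close> in linarith)+
      qed
      then have "\<not> gd L M R v1 r2" using mx R by blast
      then consider
        (LL) l1 l2 where "{l1, l2} \<in> L" "l1 < l2" "v1 < l1" "l1 < r2" "r2 < l2"
      | (MM) x1 x2 x3 where "{x1, x2, x3} \<in> M" "x1 < x2" "x2 < x3" "x1 < v1" "v1 < x2" "x2 < r2" "r2 < x3"
      | (RR) r1' r2' where "{r1', r2'} \<in> R" "r1' < r2'" "r1' < v1" "v1 < r2'" "r2' < r2"
        unfolding gd_def by blast
      then show False
      proof cases
        case LL
        show False
        proof (cases "r1 < l1")
          case True show False by (rule LR'[OF LR LL(1,2) R(1,2)]) (use True LL R in linarith)+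
        next
          case False show False by (rule gdL[OF g1m LL(1,2)]) (use False LL R in linarith)+
        qed
      next
        case MM
        show False
        proof (cases "x2 < m")
          case True show False by (rule gdM[OF g1m MM(1,2,3)]) (use True MM R in linarith)+
        next
          case False show False by (rule LMR'[OF LMR _ R(2) MM(1,2,3)]) (use False MM R \<open>\<not> r1 < v1\<close> in auto)
        qed
      next
        case RR show False by (rule gdR[OF g1k RR(1,2)]) (use RR R in linarith)+
      qed
    qed
  qed
qed




lemma face_sec_ge:
  fixes S :: "(real \<times> real) set"
  assumes "\<And>x. x \<in> S \<Longrightarrow> sec a b x \<ge> 0"
  shows "(convex hull S \<inter> {x. sec a b x = 0}) face_of convex hull S"
proof -
  have ii: "\<And>x. (a+b, -1) \<bullet> x = - ((-(a+b), 1) \<bullet> x)"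
    by (simp add: inner_prod_def algebra_simps)
  have e: "{x. sec a b x = 0} = {x. (a+b, -1) \<bullet> x = a*b}"
    using sec_inner[of a b] ii by (smt (verit) Collect_cong)
  have "\<And>x. x \<in> convex hull S \<Longrightarrow> (a+b, -1) \<bullet> x \<le> a*b"
    using hull_sec_ge[OF assms] sec_inner[of a b] ii by (smt (verit))
  then show ?thesis unfolding e
    by (intro face_of_Int_supporting_hyperplane_le) auto
qed

lemma face_sec_le:
  fixes S :: "(real \<times> real) set"
  assumes "\<And>x. x \<in> S \<Longrightarrow> sec a b x \<le> 0"
  shows "(convex hull S \<inter> {x. sec a b x = 0}) face_of convex hull S"
proof -
  have e: "{x. sec a b x = 0} = {x. (-(a+b), 1) \<bullet> x = - (a*b)}"
    using sec_inner[of a b] by (smt (verit) Collect_cong)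
  have "\<And>x. x \<in> convex hull S \<Longrightarrow> (-(a+b), 1) \<bullet> x \<le> - (a*b)"
    using hull_sec_le[OF assms] sec_inner[of a b] by (smt (verit))
  then show ?thesis unfolding e
    by (intro face_of_Int_supporting_hyperplane_le) auto
qed

lemma poly_edge:
  assumes tm: "strict_mono_on {1..n} t" and V: "V \<subseteq> {1..n}" "finite V"
    and pq: "p \<in> V" "q \<in> V" "p < q"
    and side: "(\<forall>i\<in>V. i \<le> p \<or> q \<le> i) \<or> (\<forall>i\<in>V. p \<le> i \<and> i \<le> q)"
  shows "polygon_edge t V {p, q}"
proof -
  let ?g = "sec (t p) (t q)"
  let ?H = "{x. ?g x = 0}"
  let ?C = "convex hull (pt t ` V)"
  have pn: "p \<in> {1..n}" "q \<in> {1..n}" using pq V by auto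
  have F: "(?C \<inter> ?H) face_of ?C \<and> ?C \<inter> ?H \<subseteq> convex hull (pt t ` V \<inter> ?H)"
    using side
  proof
    assume s: "\<forall>i\<in>V. i \<le> p \<or> q \<le> i"
    have "\<And>i. i \<in> V \<Longrightarrow> ?g (pt t i) \<ge> 0"
    proof -
      fix i assume i: "i \<in> V"
      show "?g (pt t i) \<ge> 0" by (rule sec_out[OF tm pn]) (use s V pq i in auto)
    qed
    then have "\<And>x. x \<in> pt t ` V \<Longrightarrow> ?g x \<ge> 0" by blast
    then show ?thesis using face_sec_ge[of "pt t ` V"] sec_ge_sub[of "pt t ` V"] V(2) by simp
  next
    assume s: "\<forall>i\<in>V. p \<le> i \<and> i \<le> q"
    have "\<And>i. i \<in> V \<Longrightarrow> ?g (pt t i) \<le> 0"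
    proof -
      fix i assume i: "i \<in> V"
      show "?g (pt t i) \<le> 0" by (rule sec_in[OF tm pn]) (use s V pq i in auto)
    qed
    then have "\<And>x. x \<in> pt t ` V \<Longrightarrow> ?g x \<le> 0" by blast
    then show ?thesis using face_sec_le[of "pt t ` V"] sec_le_sub[of "pt t ` V"] V(2) by simp
  qed
  have VH: "pt t ` V \<inter> ?H = pt t ` {p, q}"
    using img_H[OF tm V(1) pn] pq by (simp add: insert_absorb Int_absorb1)
  have eq: "?C \<inter> ?H = closed_segment (pt t p) (pt t q)"
  proof
    show "?C \<inter> ?H \<subseteq> closed_segment (pt t p) (pt t q)"
      using F VH by (simp add: segment_convex_hull)
    have z: "\<And>x. x \<in> {pt t p, pt t q} \<Longrightarrow> ?g x = 0" by (auto simp: sec_pt)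
    show "closed_segment (pt t p) (pt t q) \<subseteq> ?C \<inter> ?H"
    proof
      fix x assume x: "x \<in> closed_segment (pt t p) (pt t q)"
      then have x': "x \<in> convex hull {pt t p, pt t q}" by (simp add: segment_convex_hull)
      have "?g x \<le> 0" by (rule hull_sec_le[OF _ x']) (simp add: z)
      moreover have "?g x \<ge> 0" by (rule hull_sec_ge[OF _ x']) (simp add: z)
      moreover have "{pt t p, pt t q} \<subseteq> pt t ` V" using pq by simp
      then have "x \<in> ?C" using x' hull_mono by blast
      ultimately show "x \<in> ?C \<inter> ?H" by simp
    qed
  qed
  have "closed_segment (pt t p) (pt t q) face_of ?C" using F eq by metis
  then show ?thesis unfolding polygon_edge_def using pq by blast
qed




definition Hc :: "nat set set \<Rightarrow> nat set set \<Rightarrow> nat set set \<Rightarrow> nat set \<Rightarrow> bool" where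
  "Hc L M R V \<longleftrightarrow> (\<forall>p\<in>V. \<forall>q\<in>V. p < q \<and> (\<forall>y\<in>V. \<not> (p < y \<and> y < q)) \<longrightarrow> gd L M R p q)"

definition Inv :: "(nat \<Rightarrow> real) \<Rightarrow> nat set set \<Rightarrow> nat set set \<Rightarrow> nat set set \<Rightarrow> nat set \<Rightarrow> nat set set \<Rightarrow> bool" where
  "Inv t L M R V T \<longleftrightarrow> finite T \<and>
     (\<forall>\<tau>\<in>T. \<tau> \<subseteq> V \<and> card \<tau> = 3 \<and> (\<forall>a\<in>\<tau>. \<forall>b\<in>\<tau>. a < b \<longrightarrow> gd L M R a b)) \<and>
     (\<forall>\<tau>1\<in>T. \<forall>\<tau>2\<in>T. convex hull (pt t ` \<tau>1) \<inter> convex hull (pt t ` \<tau>2)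
                        = convex hull (pt t ` (\<tau>1 \<inter> \<tau>2))) \<and>
     (card V = 2 \<longrightarrow> T = {}) \<and>
     (card V \<ge> 3 \<longrightarrow> convex hull (pt t ` V) \<subseteq> (\<Union>\<tau>\<in>T. convex hull (pt t ` \<tau>)))"

lemma InvD1: "Inv t L M R V T \<Longrightarrow> finite T"
  unfolding Inv_def by (elim conjE)
lemma InvD2: "Inv t L M R V T \<Longrightarrow> \<forall>\<tau>\<in>T. \<tau> \<subseteq> V \<and> card \<tau> = 3 \<and> (\<forall>a\<in>\<tau>. \<forall>b\<in>\<tau>. a < b \<longrightarrow> gd L M R a b)"
  unfolding Inv_def by (elim conjE)
lemma InvD3: "Inv t L M R V T \<Longrightarrow> \<forall>\<tau>1\<in>T. \<forall>\<tau>2\<in>T. convex hull (pt t ` \<tau>1) \<inter> convex hull (pt t ` \<tau>2)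
                        = convex hull (pt t ` (\<tau>1 \<inter> \<tau>2))"
  unfolding Inv_def by (elim conjE)
lemma InvD4: "Inv t L M R V T \<Longrightarrow> card V \<ge> 3 \<Longrightarrow> convex hull (pt t ` V) \<subseteq> (\<Union>\<tau>\<in>T. convex hull (pt t ` \<tau>))"
  unfolding Inv_def by (elim conjE) (erule mp)

lemma main_ind:
  assumes tm: "strict_mono_on {1..n} t" and LR: "cond_LR L R" and LMR: "cond_LMR L M R" and MM: "cond_MM M"
  shows "finite V \<Longrightarrow> V \<subseteq> {1..n} \<Longrightarrow> card V \<ge> 2 \<Longrightarrow> Hc L M R V \<Longrightarrow> gd L M R (Min V) (Max V)
         \<Longrightarrow> \<exists>T. Inv t L M R V T"
proof (induction "card V" arbitrary: V rule: less_induct)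
  case less
  note fin = less.prems(1) and Vn = less.prems(2) and c2 = less.prems(3) and hc = less.prems(4)
    and g1k = less.prems(5)
  show ?case
  proof (cases "card V = 2")
    case True
    then show ?thesis unfolding Inv_def by (intro exI[of _ "{}"]) simp
  next
    case False
    then have c3: "card V \<ge> 3" using c2 by simp
    define v1 where "v1 = Min V"
    define vk where "vk = Max V"
    have ne: "V \<noteq> {}" using c3 by auto
    have v1: "v1 \<in> V" "\<forall>x\<in>V. v1 \<le> x" unfolding v1_def using fin ne by auto
    have vk: "vk \<in> V" "\<forall>x\<in>V. x \<le> vk" unfolding vk_def using fin ne by auto
    have "\<not> V \<subseteq> {v1, vk}"
    proof
      assume "V \<subseteq> {v1, vk}"
      then have "card V \<le> card {v1, vk}" by (rule card_mono[rotated]) simp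
      moreover have "card {v1, vk} \<le> 2" by (cases "v1 = vk") auto
      ultimately show False using c3 by simp
    qed
    then obtain u where u: "u \<in> V" "u \<noteq> v1" "u \<noteq> vk" by blast
    have uu: "v1 < u" "u < vk" using u v1 vk by (auto simp: order_le_less)
    define v2 where "v2 = Min (V - {v1})"
    have ne2: "V - {v1} \<noteq> {}" using u by auto
    have v2: "v2 \<in> V - {v1}" unfolding v2_def using fin ne2 by (intro Min_in) auto
    have v2le: "\<forall>x\<in>V - {v1}. v2 \<le> x" unfolding v2_def using fin by auto
    have v12: "v1 < v2" using v1 v2 by (auto simp: order_le_less)
    have "v2 \<le> u" using v2le u by blast
    then have v2k: "v2 < vk" using uu by linarith
    have "gd L M R v1 v2"
    proof -
      have "\<forall>y\<in>V. \<not> (v1 < y \<and> y < v2)"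
      proof (intro ballI notI)
        fix y assume "y \<in> V" "v1 < y \<and> y < v2"
        then have "y \<in> V - {v1}" by auto
        then have "v2 \<le> y" using v2le by blast
        then show False using \<open>v1 < y \<and> y < v2\<close> by linarith
      qed
      then show ?thesis using hc v1 v2 v12 unfolding Hc_def by blast
    qed
    define S where "S = {x\<in>V. v1 < x \<and> x < vk \<and> gd L M R v1 x}"
    have Sne: "S \<noteq> {}" "finite S" unfolding S_def using v2 v12 v2k \<open>gd L M R v1 v2\<close> fin by auto
    define m where "m = Max S"
    have mS: "m \<in> S" unfolding m_def using Sne by (rule Max_in[rotated]) 
    have m: "m \<in> V" "v1 < m" "m < vk" and g1m: "gd L M R v1 m" using mS unfolding S_def by auto
    have mx: "\<forall>u\<in>V. m < u \<and> u < vk \<longrightarrow> \<not> gd L M R v1 u"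
    proof (intro ballI impI notI)
      fix x assume "x \<in> V" "m < x \<and> x < vk" "gd L M R v1 x"
      then have "x \<in> S" unfolding S_def using m by auto
      then have "x \<le> m" unfolding m_def using Sne by auto
      then show False using \<open>m < x \<and> x < vk\<close> by simp
    qed
    have gmk: "gd L M R m vk"
      by (rule key_comb[OF LR LMR MM fin v1(1) vk(1) m g1m]) (use g1k mx hc in \<open>auto simp: v1_def vk_def Hc_def\<close>)
    define V1 where "V1 = {x\<in>V. x \<le> m}"
    define V2 where "V2 = {x\<in>V. m \<le> x}"
    have V1: "V1 \<subseteq> V" "finite V1" "v1 \<in> V1" "m \<in> V1" "vk \<notin> V1" "\<forall>i\<in>V1. v1 \<le> i \<and> i \<le> m"
      unfolding V1_def using fin v1 m by auto
    have V2: "V2 \<subseteq> V" "finite V2" "m \<in> V2" "vk \<in> V2" "v1 \<notin> V2" "\<forall>i\<in>V2. m \<le> i \<and> i \<le> vk"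
      unfolding V2_def using fin vk m by auto
    have cl1: "card V1 < card V" using V1 fin vk(1) by (intro psubset_card_mono) auto
    have cl2: "card V2 < card V" using V2 fin v1(1) by (intro psubset_card_mono) auto
    have v1m: "v1 \<noteq> m" using m by simp
    have mvk: "m \<noteq> vk" using m by simp
    have c12: "card {v1, m} = 2" using v1m by simp
    have c22: "card {m, vk} = 2" using mvk by simp
    have cg1: "card V1 \<ge> 2" using card_mono[of V1 "{v1, m}"] V1 c12 by auto
    have cg2: "card V2 \<ge> 2" using card_mono[of V2 "{m, vk}"] V2 c22 by auto
    have min1: "Min V1 = v1" using V1 by (intro Min_eqI) auto
    have max1: "Max V1 = m" using V1 by (intro Max_eqI) auto
    have min2: "Min V2 = m" using V2 by (intro Min_eqI) auto
    have max2: "Max V2 = vk" using V2 by (intro Max_eqI) auto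
    have hc1: "Hc L M R V1" unfolding Hc_def
    proof (intro ballI impI)
      fix p q assume pq: "p \<in> V1" "q \<in> V1" "p < q \<and> (\<forall>y\<in>V1. \<not> (p < y \<and> y < q))"
      have "\<forall>y\<in>V. \<not> (p < y \<and> y < q)"
      proof (intro ballI notI)
        fix y assume y: "y \<in> V" "p < y \<and> y < q"
        then have "y \<in> V1" using pq unfolding V1_def by auto
        then show False using pq y by blast
      qed
      then show "gd L M R p q" using hc pq V1 unfolding Hc_def by blast
    qed
    have hc2: "Hc L M R V2" unfolding Hc_def
    proof (intro ballI impI)
      fix p q assume pq: "p \<in> V2" "q \<in> V2" "p < q \<and> (\<forall>y\<in>V2. \<not> (p < y \<and> y < q))"
      have "\<forall>y\<in>V. \<not> (p < y \<and> y < q)"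
      proof (intro ballI notI)
        fix y assume y: "y \<in> V" "p < y \<and> y < q"
        then have "y \<in> V2" using pq unfolding V2_def by auto
        then show False using pq y by blast
      qed
      then show "gd L M R p q" using hc pq V2 unfolding Hc_def by blast
    qed
    obtain T1 where T1: "Inv t L M R V1 T1"
      using less.hyps[OF cl1 V1(2) _ cg1 hc1] V1(1) Vn g1m min1 max1 by auto
    obtain T2 where T2: "Inv t L M R V2 T2"
      using less.hyps[OF cl2 V2(2) _ cg2 hc2] V2(1) Vn gmk min2 max2 by auto
    define D where "D = {v1, m, vk}"
    have Dsub: "D \<subseteq> V" unfolding D_def using v1 m vk by auto
    have cD: "card D = 3" unfolding D_def using m by auto
    have g1k': "gd L M R v1 vk" using g1k by (simp add: v1_def vk_def)
    have gD: "\<forall>a\<in>D. \<forall>b\<in>D. a < b \<longrightarrow> gd L M R a b"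
      unfolding D_def using g1m gmk g1k' m(2,3) by auto
    define T where "T = T1 \<union> T2 \<union> {D}"
    have T1p: "\<forall>\<tau>\<in>T1. \<tau> \<subseteq> V1 \<and> card \<tau> = 3 \<and> (\<forall>a\<in>\<tau>. \<forall>b\<in>\<tau>. a < b \<longrightarrow> gd L M R a b)"
      using InvD2[OF T1] .
    have T2p: "\<forall>\<tau>\<in>T2. \<tau> \<subseteq> V2 \<and> card \<tau> = 3 \<and> (\<forall>a\<in>\<tau>. \<forall>b\<in>\<tau>. a < b \<longrightarrow> gd L M R a b)"
      using InvD2[OF T2] .
    have finT: "finite T" using InvD1[OF T1] InvD1[OF T2] unfolding T_def by simp
    have trT: "\<forall>\<tau>\<in>T. \<tau> \<subseteq> V \<and> card \<tau> = 3 \<and> (\<forall>a\<in>\<tau>. \<forall>b\<in>\<tau>. a < b \<longrightarrow> gd L M R a b)"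
    proof
      fix \<tau> assume "\<tau> \<in> T"
      then consider "\<tau> \<in> T1" | "\<tau> \<in> T2" | "\<tau> = D" unfolding T_def by blast
      then show "\<tau> \<subseteq> V \<and> card \<tau> = 3 \<and> (\<forall>a\<in>\<tau>. \<forall>b\<in>\<tau>. a < b \<longrightarrow> gd L M R a b)"
      proof cases
        case 1 then show ?thesis using T1p V1(1) by blast
      next
        case 2 then show ?thesis using T2p V2(1) by blast
      next
        case 3 then show ?thesis using Dsub cD gD by simp
      qed
    qed
    have n1: "v1 \<in> {1..n}" "m \<in> {1..n}" "vk \<in> {1..n}" using v1 m vk Vn by auto
    have fin3: "\<And>\<tau>. card \<tau> = 3 \<Longrightarrow> finite \<tau>" by (rule card_ge_0_finite) simp
    have inA1: "A \<subseteq> {1..n}" "\<forall>i\<in>A. v1 \<le> i \<and> i \<le> m" "finite A" if "A \<in> T1" for A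
    proof -
      have "A \<subseteq> V1" "card A = 3" using T1p that by blast+
      then show "A \<subseteq> {1..n}" "\<forall>i\<in>A. v1 \<le> i \<and> i \<le> m" "finite A"
        using V1(1,6) Vn fin3 by blast+
    qed
    have inA2: "A \<subseteq> {1..n}" "\<forall>i\<in>A. m \<le> i \<and> i \<le> vk" "finite A" if "A \<in> T2" for A
    proof -
      have "A \<subseteq> V2" "card A = 3" using T2p that by blast+
      then show "A \<subseteq> {1..n}" "\<forall>i\<in>A. m \<le> i \<and> i \<le> vk" "finite A"
        using V2(1,6) Vn fin3 by blast+
    qed
    have inD: "D \<subseteq> {1..n}" "finite D" using Dsub Vn unfolding D_def by auto
    have D1: "\<forall>i\<in>D. i \<le> v1 \<or> m \<le> i" unfolding D_def using m by auto
    have D2: "\<forall>i\<in>D. i \<le> m \<or> vk \<le> i" unfolding D_def using m by auto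
    have I12: "convex hull (pt t ` A) \<inter> convex hull (pt t ` B) = convex hull (pt t ` (A \<inter> B))"
      if "A \<in> T1" "B \<in> T2" for A B
    proof (rule chord_int[OF tm m(2) n1(1,2) inA1[OF that(1)]])
      show "B \<subseteq> {1..n}" "finite B" using inA2[OF that(2)] by blast+
      show "\<forall>i\<in>B. i \<le> v1 \<or> m \<le> i" using inA2(2)[OF that(2)] by blast
    qed
    have I1D: "convex hull (pt t ` A) \<inter> convex hull (pt t ` D) = convex hull (pt t ` (A \<inter> D))"
      if "A \<in> T1" for A
      by (rule chord_int[OF tm m(2) n1(1,2) inA1[OF that] inD(1) D1 inD(2)])
    have I2D: "convex hull (pt t ` A) \<inter> convex hull (pt t ` D) = convex hull (pt t ` (A \<inter> D))"
      if "A \<in> T2" for A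
      by (rule chord_int[OF tm m(3) n1(2,3) inA2[OF that] inD(1) D2 inD(2)])
    have IT1: "\<forall>\<tau>1\<in>T1. \<forall>\<tau>2\<in>T1. convex hull (pt t ` \<tau>1) \<inter> convex hull (pt t ` \<tau>2)
                        = convex hull (pt t ` (\<tau>1 \<inter> \<tau>2))" using InvD3[OF T1] .
    have IT2: "\<forall>\<tau>1\<in>T2. \<forall>\<tau>2\<in>T2. convex hull (pt t ` \<tau>1) \<inter> convex hull (pt t ` \<tau>2)
                        = convex hull (pt t ` (\<tau>1 \<inter> \<tau>2))" using InvD3[OF T2] .
    have I21: "convex hull (pt t ` B) \<inter> convex hull (pt t ` A) = convex hull (pt t ` (B \<inter> A))"
      if "A \<in> T1" "B \<in> T2" for A B using I12[OF that] by (simp add: Int_commute)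
    have ID1: "convex hull (pt t ` D) \<inter> convex hull (pt t ` A) = convex hull (pt t ` (D \<inter> A))"
      if "A \<in> T1" for A using I1D[OF that] by (simp add: Int_commute)
    have ID2: "convex hull (pt t ` D) \<inter> convex hull (pt t ` A) = convex hull (pt t ` (D \<inter> A))"
      if "A \<in> T2" for A using I2D[OF that] by (simp add: Int_commute)
    have IT: "\<forall>\<tau>1\<in>T. \<forall>\<tau>2\<in>T. convex hull (pt t ` \<tau>1) \<inter> convex hull (pt t ` \<tau>2)
                        = convex hull (pt t ` (\<tau>1 \<inter> \<tau>2))"
    proof (intro ballI)
      fix A B assume A: "A \<in> T" and B: "B \<in> T"
      have "A \<in> T1 \<or> A \<in> T2 \<or> A = D" using A unfolding T_def by blast
      moreover have "B \<in> T1 \<or> B \<in> T2 \<or> B = D" using B unfolding T_def by blast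
      ultimately show "convex hull (pt t ` A) \<inter> convex hull (pt t ` B) = convex hull (pt t ` (A \<inter> B))"
        by (elim disjE) (simp_all add: IT1 IT2 I12 I1D I2D I21 ID1 ID2)
    qed
    have cov: "convex hull (pt t ` V) \<subseteq> (\<Union>\<tau>\<in>T. convex hull (pt t ` \<tau>))"
    proof -
      define Vo where "Vo = {i\<in>V. i \<le> v1 \<or> m \<le> i}"
      have e1: "{i\<in>V. v1 \<le> i \<and> i \<le> m} = V1" unfolding V1_def using v1 by auto
      have e2: "{i\<in>V. i \<le> v1 \<or> m \<le> i} = Vo" unfolding Vo_def by simp
      have c1: "convex hull (pt t ` V) \<subseteq> convex hull (pt t ` V1) \<union> convex hull (pt t ` Vo)"
        using chord_cover[OF tm m(2) v1(1) m(1) Vn fin] unfolding e1 e2 .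
      have Vo: "m \<in> Vo" "vk \<in> Vo" "Vo \<subseteq> {1..n}" "finite Vo" unfolding Vo_def using m vk Vn fin by auto
      have e3: "{i\<in>Vo. m \<le> i \<and> i \<le> vk} = V2" unfolding Vo_def V2_def using vk m by auto
      have e4: "{i\<in>Vo. i \<le> m \<or> vk \<le> i} = D" unfolding Vo_def D_def using vk m v1 by force
      have c2: "convex hull (pt t ` Vo) \<subseteq> convex hull (pt t ` V2) \<union> convex hull (pt t ` D)"
        using chord_cover[OF tm m(3) Vo] unfolding e3 e4 .
      have DT: "convex hull (pt t ` D) \<subseteq> (\<Union>\<tau>\<in>T. convex hull (pt t ` \<tau>))" unfolding T_def by blast
      have s1: "convex hull (pt t ` V1) \<subseteq> (\<Union>\<tau>\<in>T. convex hull (pt t ` \<tau>))"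
      proof (cases "card V1 = 2")
        case True
        then have "V1 = {v1, m}" using V1 c12 by (intro card_seteq[symmetric]) auto
        then have "convex hull (pt t ` V1) \<subseteq> convex hull (pt t ` D)" unfolding D_def
          by (intro hull_mono) auto
        then show ?thesis using DT by blast
      next
        case False
        then have "convex hull (pt t ` V1) \<subseteq> (\<Union>\<tau>\<in>T1. convex hull (pt t ` \<tau>))"
          using InvD4[OF T1] cg1 by simp
        then show ?thesis unfolding T_def by blast
      qed
      have s2: "convex hull (pt t ` V2) \<subseteq> (\<Union>\<tau>\<in>T. convex hull (pt t ` \<tau>))"
      proof (cases "card V2 = 2")
        case True
        then have "V2 = {m, vk}" using V2 c22 by (intro card_seteq[symmetric]) auto
        then have "convex hull (pt t ` V2) \<subseteq> convex hull (pt t ` D)" unfolding D_def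
          by (intro hull_mono) auto
        then show ?thesis using DT by blast
      next
        case False
        then have "convex hull (pt t ` V2) \<subseteq> (\<Union>\<tau>\<in>T2. convex hull (pt t ` \<tau>))"
          using InvD4[OF T2] cg2 by simp
        then show ?thesis unfolding T_def by blast
      qed
      show ?thesis using c1 c2 s1 s2 DT by blast
    qed
    have "Inv t L M R V T" unfolding Inv_def using finT trT IT cov c3 by (intro conjI) simp_all
    then show ?thesis by blast
  qed
qed




theorem lemma3p8:
  fixes n :: nat and t :: "nat \<Rightarrow> real"
    and L R M :: "nat set set" and V :: "nat set"
  assumes t_mono: "strict_mono_on {1..n} t"
    and L_edges: "\<forall>e\<in>L. e \<subseteq> {1..n} \<and> card e = 2"
    and R_edges: "\<forall>e\<in>R. e \<subseteq> {1..n} \<and> card e = 2"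
    and M_tris: "\<forall>m\<in>M. m \<subseteq> {1..n} \<and> card m = 3"
    and LR: "cond_LR L R"
    and LMR: "cond_LMR L M R"
    and MM: "cond_MM M"
    and V_sub: "V \<subseteq> {1..n}"
    and V_card: "card V \<ge> 3"
    and P_edges: "\<forall>e. polygon_edge t V e \<longrightarrow> good_edge L M R e"
  shows "\<exists>T. is_triangulation t V T \<and> (\<forall>e\<in>tri_edges T. good_edge L M R e)"
proof -
  have fin: "finite V" using V_sub finite_subset by blast
  have hc: "Hc L M R V" unfolding Hc_def
  proof (intro ballI impI)
    fix p q assume pq: "p \<in> V" "q \<in> V" "p < q \<and> (\<forall>y\<in>V. \<not> (p < y \<and> y < q))"
    have "\<forall>i\<in>V. i \<le> p \<or> q \<le> i"
    proof
      fix i assume "i \<in> V"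
      then have "\<not> (p < i \<and> i < q)" using pq by blast
      then show "i \<le> p \<or> q \<le> i" by linarith
    qed
    then have "polygon_edge t V {p, q}" using poly_edge[OF t_mono V_sub fin pq(1,2)] pq(3) by blast
    then have "good_edge L M R {p, q}" using P_edges by blast
    then show "gd L M R p q" using good_gd pq(3) by blast
  qed
  have ne: "V \<noteq> {}" using V_card by auto
  have mn: "Min V \<in> V" "Max V \<in> V" using fin ne by auto
  have "Min V \<noteq> Max V"
  proof
    assume e: "Min V = Max V"
    have "V \<subseteq> {Min V}"
    proof
      fix x assume "x \<in> V"
      then have "Min V \<le> x" "x \<le> Max V" using fin by auto
      then show "x \<in> {Min V}" using e by simp
    qed
    then have "card V \<le> 1" using card_mono[of "{Min V}" V] by simp
    then show False using V_card by simp
  qed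
  moreover have "Min V \<le> Max V" using fin ne mn by simp
  ultimately have mlt: "Min V < Max V" by simp
  have "\<forall>i\<in>V. Min V \<le> i \<and> i \<le> Max V" using fin by auto
  then have "polygon_edge t V {Min V, Max V}" using poly_edge[OF t_mono V_sub fin mn mlt] by blast
  then have "good_edge L M R {Min V, Max V}" using P_edges by blast
  then have g: "gd L M R (Min V) (Max V)" using good_gd mlt by blast
  obtain T where T: "Inv t L M R V T"
    using main_ind[OF t_mono LR LMR MM fin V_sub _ hc g] V_card by auto
  have T2: "\<forall>\<tau>\<in>T. \<tau> \<subseteq> V \<and> card \<tau> = 3 \<and> (\<forall>a\<in>\<tau>. \<forall>b\<in>\<tau>. a < b \<longrightarrow> gd L M R a b)"
    using InvD2[OF T] .
  have cov: "(\<Union>\<tau>\<in>T. convex hull (pt t ` \<tau>)) = convex hull (pt t ` V)"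
  proof
    show "convex hull (pt t ` V) \<subseteq> (\<Union>\<tau>\<in>T. convex hull (pt t ` \<tau>))" using InvD4[OF T V_card] .
    show "(\<Union>\<tau>\<in>T. convex hull (pt t ` \<tau>)) \<subseteq> convex hull (pt t ` V)"
    proof (rule UN_least)
      fix \<tau> assume "\<tau> \<in> T"
      then have "\<tau> \<subseteq> V" using T2 by blast
      then show "convex hull (pt t ` \<tau>) \<subseteq> convex hull (pt t ` V)" by (intro hull_mono image_mono)
    qed
  qed
  have tri: "is_triangulation t V T"
    unfolding is_triangulation_def using InvD1[OF T] T2 cov InvD3[OF T] by blast
  have edges: "\<forall>e\<in>tri_edges T. good_edge L M R e"
  proof
    fix e assume "e \<in> tri_edges T"
    then obtain \<tau> where \<tau>: "\<tau> \<in> T" "e \<subseteq> \<tau>" "card e = 2" unfolding tri_edges_def by blast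
    then obtain a b where ab: "e = {a, b}" "a \<noteq> b" by (meson card_2_iff)
    have gall: "\<forall>a\<in>\<tau>. \<forall>b\<in>\<tau>. a < b \<longrightarrow> gd L M R a b" using T2 \<tau>(1) by blast
    have ins: "a \<in> \<tau>" "b \<in> \<tau>" using ab \<tau>(2) by auto
    show "good_edge L M R e"
    proof (cases "a < b")
      case True
      then show ?thesis using gall ins good_gd ab(1) by blast
    next
      case False
      then have "b < a" using ab(2) by simp
      moreover have "e = {b, a}" using ab(1) by blast
      ultimately show ?thesis using gall ins good_gd by blast
    qed
  qed
  show ?thesis using tri edges by blast
qed


end
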